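(* Let $N\ge 3$, $M\ge 2$, $L\ge1$ be integers, $P>0$, $\tau\in[0,1]$, $\sigma_R>0$, $c_3\in\mathbb{C}\setminus\{0\}$, $\alpha,\beta\in\mathbb{C}$ with $|\alpha|^2+|\beta|^2=1$. Let $\theta\sim\mathcal{U}(-\pi/2,\pi/2)$ and $\mathbf{h}\sim\mathcal{CN}(\mathbf{0},\mathbf{I}_N)$ be independent, and let $\mathrm{CRB}(\theta)$ be the random variable defined below. Then for every $\epsilon>0$, setting $$x_\epsilon=\sqrt{6}\,\sigma_R\left(\epsilon MN\pi^2LP|c_3|^2\Big(|\alpha|^2\tau(M^2-1)+\frac{(N^2-1)(1-\tau)}{N-2}\Big)\right)^{-1/2},$$ we have $P(\mathrm{CRB}(\theta)>\epsilon)\ge \frac{2}{\pi}\sin^{-1}(x_\epsilon)$ if $x_\epsilon<1$, and $P(\mathrm{CRB}(\theta)>\epsilon)\ge 1$ otherwise.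
   Context: Steering vectors: $\mathbf{a}(\theta)\in\mathbb{C}^N$ has $i$-th entry $e^{-j\pi\sin(\theta)\frac{N-(2i-1)}{2}}$, $i=1,\dots,N$; $\mathbf{b}(\theta)\in\mathbb{C}^M$ has $m$-th entry $e^{-j\pi\sin(\theta)\frac{M-(2m-1)}{2}}$. Define $\tilde{\mathbf{a}}=\mathbf{a}/\|\mathbf{a}\|$, $\tilde{\mathbf{h}}=\frac{\mathbf{h}-(\tilde{\mathbf{a}}^H\mathbf{h})\tilde{\mathbf{a}}}{\|\mathbf{h}-(\tilde{\mathbf{a}}^H\mathbf{h})\tilde{\mathbf{a}}\|}$ (well defined almost surely), $\mathbf{t}_1=\alpha\tilde{\mathbf{a}}+\beta\tilde{\mathbf{h}}$, and let $\mathbf{t}_3,\dots,\mathbf{t}_N$ be an orthonormal basis of the orthogonal complement of $\mathrm{span}\{\tilde{\mathbf{a}},\tilde{\mathbf{h}}\}$. Let $\gamma_1=P\tau$, $\gamma_2=\frac{(1-\tau)P}{N-2}$, $\mathbf{R}_x=\gamma_1\mathbf{t}_1\mathbf{t}_1^H+\gamma_2\sum_{i=3}^N\mathbf{t}_i\mathbf{t}_i^H$, $\mathbf{A}(\theta)=\mathbf{b}(\theta)\mathbf{a}(\theta)^H$, $\dot{\mathbf{A}}=\frac{d\mathbf{A}}{d\theta}$, and $$\mathrm{CRB}(\theta)=\frac{\sigma_R^2\,\mathrm{Tr}(\mathbf{A}^H\mathbf{A}\mathbf{R}_x)}{2|c_3|^2L\left(\mathrm{Tr}(\mathbf{A}^H\mathbf{A}\mathbf{R}_x)\,\mathrm{Tr}(\dot{\mathbf{A}}^H\dot{\mathbf{A}}\mathbf{R}_x)-|\mathrm{Tr}(\dot{\mathbf{A}}^H\mathbf{A}\mathbf{R}_x)|^2\right)},$$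 which is a random variable through $\theta$ and $\mathbf{h}$. *)

theory Defs
  imports "HOL-Probability.Probability"
begin

text \<open>Vectors are functions nat => complex (index i = 0..n-1 corresponds to the paper's
  index i+1); matrices are functions nat => nat => complex with explicit dimensions.\<close>

definition steer :: "nat \<Rightarrow> real \<Rightarrow> nat \<Rightarrow> complex" where
  "steer n \<theta> i = exp (- \<i> * complex_of_real (pi * sin \<theta> * (real n - (2 * real (i + 1) - 1)) / 2))"

definition cinner :: "nat \<Rightarrow> (nat \<Rightarrow> complex) \<Rightarrow> (nat \<Rightarrow> complex) \<Rightarrow> complex" where
  "cinner n u v = (\<Sum>i<n. cnj (u i) * v i)"

definition vnorm :: "nat \<Rightarrow> (nat \<Rightarrow> complex) \<Rightarrow> real" where
  "vnorm n v = sqrt (\<Sum>i<n. (cmod (v i))\<^sup>2)"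

definition outer :: "(nat \<Rightarrow> complex) \<Rightarrow> (nat \<Rightarrow> complex) \<Rightarrow> nat \<Rightarrow> nat \<Rightarrow> complex" where
  "outer u v = (\<lambda>i j. u i * cnj (v j))"

definition mmul :: "nat \<Rightarrow> (nat \<Rightarrow> nat \<Rightarrow> complex) \<Rightarrow> (nat \<Rightarrow> nat \<Rightarrow> complex) \<Rightarrow> nat \<Rightarrow> nat \<Rightarrow> complex" where
  "mmul k A B = (\<lambda>i j. \<Sum>l<k. A i l * B l j)"

definition madj :: "(nat \<Rightarrow> nat \<Rightarrow> complex) \<Rightarrow> nat \<Rightarrow> nat \<Rightarrow> complex" where
  "madj A = (\<lambda>i j. cnj (A j i))"

definition mtr :: "nat \<Rightarrow> (nat \<Rightarrow> nat \<Rightarrow> complex) \<Rightarrow> complex" where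
  "mtr n A = (\<Sum>i<n. A i i)"

definition a_tilde :: "nat \<Rightarrow> real \<Rightarrow> nat \<Rightarrow> complex" where
  "a_tilde N \<theta> = (\<lambda>i. steer N \<theta> i / complex_of_real (vnorm N (steer N \<theta>)))"

definition h_tilde :: "nat \<Rightarrow> real \<Rightarrow> (nat \<Rightarrow> complex) \<Rightarrow> nat \<Rightarrow> complex" where
  "h_tilde N \<theta> h = (let av = a_tilde N \<theta>; r = (\<lambda>i. h i - cinner N av h * av i)
     in (\<lambda>i. r i / complex_of_real (vnorm N r)))"

text \<open>Transmit covariance. The sum over an orthonormal basis t_3..t_N of the orthogonal complement
  of span{a~, h~} is (independently of the basis) the orthogonal projector I - a~ a~^H - h~ h~^H.\<close>
definition Rx :: "nat \<Rightarrow> real \<Rightarrow> real \<Rightarrow> complex \<Rightarrow> complex \<Rightarrow> real \<Rightarrow> (nat \<Rightarrow> complex)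
                  \<Rightarrow> nat \<Rightarrow> nat \<Rightarrow> complex" where
  "Rx N P \<tau> \<alpha> \<beta> \<theta> h =
     (let av = a_tilde N \<theta>; ht = h_tilde N \<theta> h;
          t1 = (\<lambda>i. \<alpha> * av i + \<beta> * ht i);
          g1 = P * \<tau>; g2 = (1 - \<tau>) * P / (real N - 2)
      in (\<lambda>i j. complex_of_real g1 * outer t1 t1 i j
               + complex_of_real g2 * ((if i = j then 1 else 0) - outer av av i j - outer ht ht i j)))"

definition Amat :: "nat \<Rightarrow> nat \<Rightarrow> real \<Rightarrow> nat \<Rightarrow> nat \<Rightarrow> complex" where
  "Amat M N \<theta> = outer (steer M \<theta>) (steer N \<theta>)"

definition Adot :: "nat \<Rightarrow> nat \<Rightarrow> real \<Rightarrow> nat \<Rightarrow> nat \<Rightarrow> complex" where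
  "Adot M N \<theta> = (\<lambda>i j. vector_derivative (\<lambda>t. Amat M N t i j) (at \<theta>))"

text \<open>The CRB, as an extended real. When the Fisher-information determinant
  Tr(A^H A R) Tr(Adot^H Adot R) - |Tr(Adot^H A R)|^2 vanishes the CRB is taken to be +infinity.\<close>
definition CRB :: "nat \<Rightarrow> nat \<Rightarrow> nat \<Rightarrow> real \<Rightarrow> real \<Rightarrow> real \<Rightarrow> complex \<Rightarrow> complex \<Rightarrow> complex
                   \<Rightarrow> real \<Rightarrow> (nat \<Rightarrow> complex) \<Rightarrow> ereal" where
  "CRB N M L P \<tau> \<sigma>R c3 \<alpha> \<beta> \<theta> h =
     (let R = Rx N P \<tau> \<alpha> \<beta> \<theta> h; A = Amat M N \<theta>; Ad = Adot M N \<theta>;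
          T1 = mtr N (mmul N (mmul M (madj A) A) R);
          T2 = mtr N (mmul N (mmul M (madj Ad) Ad) R);
          T3 = mtr N (mmul N (mmul M (madj Ad) A) R);
          den = T1 * T2 - complex_of_real ((cmod T3)\<^sup>2)
      in if den = 0 then \<infinity>
         else ereal (Re (complex_of_real (\<sigma>R\<^sup>2) * T1 /
                          (2 * complex_of_real ((cmod c3)\<^sup>2) * of_nat L * den))))"

definition cn_std :: "complex measure" where
  "cn_std = density lborel (\<lambda>z. ennreal (exp (- (cmod z)\<^sup>2) / pi))"

definition joint_law :: "nat \<Rightarrow> (real \<times> (nat \<Rightarrow> complex)) measure" where
  "joint_law N = uniform_measure lborel {-(pi/2)<..<pi/2} \<Otimes>\<^sub>M (\<Pi>\<^sub>M i\<in>{..<N}. cn_std)"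

end

theory Submission
  imports Defs
begin


lemma cn_std_prob: "prob_space cn_std"
proof
  have nd: "\<And>x::real. normal_density 0 (sqrt (1/2)) x = exp (- x\<^sup>2) / sqrt pi"
    by (simp add: normal_density_def power_divide)
  have "emeasure cn_std (space cn_std) = (\<integral>\<^sup>+z. ennreal (exp (- (cmod z)\<^sup>2) / pi) \<partial>lborel)"
    unfolding cn_std_def by (simp add: emeasure_density)
  also have "\<dots> = (\<integral>\<^sup>+z. (\<Prod>b\<in>Basis. ennreal (normal_density 0 (sqrt (1/2)) ((z::complex) \<bullet> b))) \<partial>lborel)"
  proof -
    have "\<And>z::complex. ennreal (exp (- (cmod z)\<^sup>2) / pi) = (\<Prod>b\<in>Basis. ennreal (normal_density 0 (sqrt (1/2)) (z \<bullet> b)))"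
    proof -
    fix z :: complex
    have "exp (- (cmod z)\<^sup>2) / pi = (exp (- (Re z)\<^sup>2) / sqrt pi) * (exp (- (Im z)\<^sup>2) / sqrt pi)"
      by (simp add: cmod_power2 exp_add[symmetric] exp_diff)
    then show "ennreal (exp (- (cmod z)\<^sup>2) / pi) = (\<Prod>b\<in>Basis. ennreal (normal_density 0 (sqrt (1/2)) (z \<bullet> b)))"
      by (simp add: Basis_complex_def nd ennreal_mult'[symmetric] inner_complex_def)
    qed
    then show ?thesis by simp
  qed
  also have "\<dots> = (\<Prod>b\<in>(Basis::complex set). (\<integral>\<^sup>+x. ennreal (normal_density 0 (sqrt (1/2)) x) \<partial>lborel))"
    by (rule nn_integral_lborel_prod) auto
  also have "(\<integral>\<^sup>+x. ennreal (normal_density 0 (sqrt (1/2)) x) \<partial>lborel) = 1"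
  proof -
    interpret prob_space "density lborel (normal_density 0 (sqrt (1/2)))"
      by (rule prob_space_normal_density) simp
    show ?thesis using emeasure_space_1 by (simp add: emeasure_density)
  qed
  finally show "emeasure cn_std (space cn_std) = 1" by simp
qed

lemma joint_prob: "prob_space (joint_law N)"
proof -
  interpret A: prob_space "uniform_measure lborel {-(pi/2)<..<pi/2}"
    by (rule prob_space_uniform_measure) auto
  interpret B: prob_space "(\<Pi>\<^sub>M i\<in>{..<N}. cn_std)"
    by (rule prob_space_PiM) (rule cn_std_prob)
  interpret pair_prob_space "uniform_measure lborel {-(pi/2)<..<pi/2}" "(\<Pi>\<^sub>M i\<in>{..<N}. cn_std)" ..
  show ?thesis unfolding joint_law_def by (rule P.prob_space_axioms)
qed

lemma meas_part:
  assumes c: "0 \<le> c" "c < pi/2" and E: "E \<in> sets (joint_law N)"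
    and sub: "\<And>\<theta> h. (\<theta>,h) \<in> space (joint_law N) \<Longrightarrow> c < \<bar>\<theta>\<bar> \<Longrightarrow> \<bar>\<theta>\<bar> < pi/2 \<Longrightarrow> (\<theta>,h) \<in> E"
  shows "measure (joint_law N) E \<ge> (pi - 2*c)/pi"
proof -
  let ?U = "uniform_measure lborel {-(pi/2)<..<pi/2}"
  let ?B = "(\<Pi>\<^sub>M i\<in>{..<N}. cn_std)"
  interpret A: prob_space ?U
    by (rule prob_space_uniform_measure) auto
  interpret B: prob_space ?B
    by (rule prob_space_PiM) (rule cn_std_prob)
  interpret pair_prob_space ?U ?B ..
  interpret J: prob_space "joint_law N" by (rule joint_prob)
  define S where "S = {-(pi/2)<..<-c} \<union> {c<..<pi/2}"
  have Ssets: "S \<in> sets borel" unfolding S_def by auto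
  have "emeasure ?U S = emeasure lborel (S \<inter> {-(pi/2)<..<pi/2}) / emeasure lborel {-(pi/2)<..<pi/2}"
    using Ssets by (subst emeasure_uniform_measure) (auto simp: Int_commute)
  also have "S \<inter> {-(pi/2)<..<pi/2} = S" unfolding S_def using c by auto
  also have "emeasure lborel S = emeasure lborel {-(pi/2)<..<-c} + emeasure lborel {c<..<pi/2}"
    unfolding S_def using c by (intro plus_emeasure[symmetric]) auto
  also have "\<dots> = ennreal (pi - 2*c)"
    using c by (simp add: ennreal_plus[symmetric] del: ennreal_plus)
  also have "emeasure lborel {-(pi/2)<..<pi/2} = ennreal pi" by simp
  finally have US: "emeasure ?U S = ennreal ((pi - 2*c)/pi)"
    using c by (simp add: divide_ennreal)
  have "emeasure (joint_law N) (S \<times> space ?B) = emeasure ?U S * emeasure ?B (space ?B)"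
    unfolding joint_law_def using Ssets by (intro B.emeasure_pair_measure_Times) (auto simp: sets_uniform_measure)
  also have "\<dots> = ennreal ((pi - 2*c)/pi)" using US B.emeasure_space_1 by simp
  finally have m: "measure (joint_law N) (S \<times> space ?B) = (pi - 2*c)/pi"
    using c by (simp add: measure_def)
  have "S \<times> space ?B \<subseteq> E"
  proof
    fix x assume x: "x \<in> S \<times> space ?B"
    then obtain t h where th: "x = (t,h)" "t \<in> S" "h \<in> space ?B" by auto
    have "(t,h) \<in> space (joint_law N)"
      using th Ssets unfolding joint_law_def by (auto simp: space_pair_measure)
    moreover have "c < \<bar>t\<bar>" "\<bar>t\<bar> < pi/2" using th(2) c unfolding S_def by auto
    ultimately show "x \<in> E" using sub th(1) by auto
  qed
  then have "measure (joint_law N) (S \<times> space ?B) \<le> measure (joint_law N) E"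
    by (intro J.finite_measure_mono E)
  then show ?thesis using m by simp
qed


definition ev :: "nat \<Rightarrow> nat \<Rightarrow> real" where
  "ev n i = real n - (2 * real (i + 1) - 1)"

lemma steer_ev: "steer n t i = exp (- \<i> * complex_of_real (pi * sin t * ev n i / 2))"
  unfolding steer_def ev_def ..

lemma Amat_exp: "Amat M N t k j = exp (- \<i> * complex_of_real (pi * sin t * (ev M k - ev N j) / 2))"
proof -
  have "Amat M N t k j = exp (- \<i> * complex_of_real (pi * sin t * ev M k / 2)) *
      exp (\<i> * complex_of_real (pi * sin t * ev N j / 2))"
    unfolding Amat_def outer_def steer_ev exp_cnj by simp
  also have "\<dots> = exp (- \<i> * complex_of_real (pi * sin t * (ev M k - ev N j) / 2))"
    by (simp add: exp_add[symmetric] algebra_simps diff_divide_distrib)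
  finally show ?thesis .
qed

lemma Adot_explicit: "Adot M N t = (\<lambda>k j. - \<i> * complex_of_real (pi * cos t * (ev M k - ev N j) / 2) * Amat M N t k j)"
proof (intro ext)
  fix k j
  define c where "c = ev M k - ev N j"
  define G where "G = (\<lambda>z::complex. exp (- \<i> * (of_real pi * sin z * of_real c / 2)))"
  have GA: "(\<lambda>x. Amat M N x k j) = (\<lambda>x. G (of_real x))"
    unfolding G_def Amat_exp c_def by (simp add: sin_of_real)
  have "(G has_field_derivative (G (of_real t) * (- \<i> * (of_real pi * cos (of_real t) * of_real c / 2)))) (at (of_real t))"
    unfolding G_def by (auto intro!: derivative_eq_intros)
  then have "((\<lambda>x. G (of_real x)) has_vector_derivative (G (of_real t) * (- \<i> * (of_real pi * cos (of_real t) * of_real c / 2)))) (at t)"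
    by (rule has_vector_derivative_real_field)
  then have "vector_derivative (\<lambda>x. Amat M N x k j) (at t) = G (of_real t) * (- \<i> * (of_real pi * cos (of_real t) * of_real c / 2))"
    unfolding GA by (rule vector_derivative_at)
  then show "Adot M N t k j = - \<i> * complex_of_real (pi * cos t * (ev M k - ev N j) / 2) * Amat M N t k j"
    using fun_cong[OF GA, of t] unfolding Adot_def GA c_def by (simp add: cos_of_real)
qed



lemma sets_joint: "sets (joint_law N) = sets (borel \<Otimes>\<^sub>M (\<Pi>\<^sub>M i\<in>{..<N}. (borel::complex measure)))"
  unfolding joint_law_def cn_std_def
  by (intro sets_pair_measure_cong sets_PiM_cong) auto

lemma meas_fst[measurable]: "fst \<in> borel_measurable (joint_law N)"
  by (simp add: measurable_cong_sets[OF sets_joint refl])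

lemma meas_snd[measurable]: "i \<in> {..<N} \<Longrightarrow> (\<lambda>x. snd x i) \<in> borel_measurable (joint_law N)"
  by (simp add: measurable_cong_sets[OF sets_joint refl])



lemma m_cnj[measurable]: "(cnj :: complex \<Rightarrow> complex) \<in> borel_measurable borel"
  by (rule borel_measurable_continuous_onI) (intro continuous_intros)

lemma meas_snd_all[measurable]: "(\<lambda>x. snd x i) \<in> borel_measurable (joint_law N)"
proof (cases "i < N")
  case True then show ?thesis using meas_snd[of i N] by simp
next
  case False
  have "(\<lambda>x. undefined) \<in> borel_measurable (joint_law N)" by simp
  moreover have "\<And>x. x \<in> space (joint_law N) \<Longrightarrow> undefined = snd x i"
    using False unfolding joint_law_def by (auto simp: space_pair_measure space_PiM PiE_def extensional_def)
  ultimately show ?thesis by (rule measurable_cong[THEN iffD1, rotated])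
qed

context
  fixes Mm :: "'a measure" and t :: "'a \<Rightarrow> real" and h :: "'a \<Rightarrow> nat \<Rightarrow> complex"
  assumes tm[measurable]: "t \<in> borel_measurable Mm"
    and hm[measurable]: "\<And>i. (\<lambda>x. h x i) \<in> borel_measurable Mm"
begin

lemma m_steer[measurable]: "(\<lambda>x. steer n (t x) i) \<in> borel_measurable Mm"
  unfolding steer_def by measurable

lemma m_atil[measurable]: "(\<lambda>x. a_tilde N (t x) i) \<in> borel_measurable Mm"
  unfolding a_tilde_def vnorm_def by measurable

lemma m_cin[measurable]: "(\<lambda>x. cinner N (a_tilde N (t x)) (h x)) \<in> borel_measurable Mm"
  unfolding cinner_def by measurable

lemma m_htil[measurable]: "(\<lambda>x. h_tilde N (t x) (h x) i) \<in> borel_measurable Mm"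
  unfolding h_tilde_def Let_def vnorm_def by measurable

lemma m_Rx[measurable]: "(\<lambda>x. Rx N P \<tau> \<alpha> \<beta> (t x) (h x) i j) \<in> borel_measurable Mm"
  unfolding Rx_def Let_def outer_def by measurable

lemma m_Amat[measurable]: "(\<lambda>x. Amat M N (t x) i j) \<in> borel_measurable Mm"
  unfolding Amat_def outer_def by measurable

lemma m_Adot[measurable]: "(\<lambda>x. Adot M N (t x) i j) \<in> borel_measurable Mm"
  unfolding Adot_explicit by measurable

lemma m_T1[measurable]: "(\<lambda>x. mtr N (mmul N (mmul M (madj (Amat M N (t x))) (Amat M N (t x))) (Rx N P \<tau> \<alpha> \<beta> (t x) (h x)))) \<in> borel_measurable Mm"
  unfolding mtr_def mmul_def madj_def by measurable

lemma m_T2[measurable]: "(\<lambda>x. mtr N (mmul N (mmul M (madj (Adot M N (t x))) (Adot M N (t x))) (Rx N P \<tau> \<alpha> \<beta> (t x) (h x)))) \<in> borel_measurable Mm"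
  unfolding mtr_def mmul_def madj_def by measurable

lemma m_T3[measurable]: "(\<lambda>x. mtr N (mmul N (mmul M (madj (Adot M N (t x))) (Amat M N (t x))) (Rx N P \<tau> \<alpha> \<beta> (t x) (h x)))) \<in> borel_measurable Mm"
  unfolding mtr_def mmul_def madj_def by measurable

lemma m_CRB: "(\<lambda>x. CRB N M L P \<tau> \<sigma>R c3 \<alpha> \<beta> (t x) (h x)) \<in> borel_measurable Mm"
  unfolding CRB_def Let_def by measurable

end

lemma CRB_meas: "{x \<in> space (joint_law N). CRB N M L P \<tau> \<sigma>R c3 \<alpha> \<beta> (fst x) (snd x) > ereal \<epsilon>} \<in> sets (joint_law N)"
proof -
  have [measurable]: "(\<lambda>x. CRB N M L P \<tau> \<sigma>R c3 \<alpha> \<beta> (fst x) (snd x)) \<in> borel_measurable (joint_law N)"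
    by (rule m_CRB) measurable
  show ?thesis by measurable
qed



definition rform :: "nat \<Rightarrow> (nat \<Rightarrow> nat \<Rightarrow> complex) \<Rightarrow> (nat \<Rightarrow> complex) \<Rightarrow> (nat \<Rightarrow> complex) \<Rightarrow> complex" where
  "rform n R x y = (\<Sum>l<n. \<Sum>j<n. cnj (x l) * R l j * y j)"

definition trF :: "nat \<Rightarrow> nat \<Rightarrow> (nat \<Rightarrow> nat \<Rightarrow> complex) \<Rightarrow> (nat \<Rightarrow> nat \<Rightarrow> complex) \<Rightarrow> (nat \<Rightarrow> nat \<Rightarrow> complex) \<Rightarrow> complex" where
  "trF N M X Y R = mtr N (mmul N (mmul M (madj X) Y) R)"

lemma cinner_sym: "cinner n x y = cnj (cinner n y x)"
  unfolding cinner_def by (simp add: mult.commute)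

lemma cinner_self: "cinner n x x = of_real (\<Sum>i<n. (cmod (x i))\<^sup>2)"
  unfolding cinner_def of_real_sum by (intro sum.cong refl) (metis complex_norm_square mult.commute)

lemma cinner_add_right: "cinner n x (\<lambda>i. y i + z i) = cinner n x y + cinner n x z"
  unfolding cinner_def by (simp add: algebra_simps sum.distrib)
lemma cinner_diff_right: "cinner n x (\<lambda>i. y i - z i) = cinner n x y - cinner n x z"
  unfolding cinner_def by (simp add: algebra_simps sum_subtractf)
lemma cinner_scale_right: "cinner n x (\<lambda>i. c * y i) = c * cinner n x y"
  unfolding cinner_def by (simp add: algebra_simps sum_distrib_left)
lemma cinner_add_left: "cinner n (\<lambda>i. y i + z i) x = cinner n y x + cinner n z x"
  unfolding cinner_def by (simp add: algebra_simps sum.distrib)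
lemma cinner_diff_left: "cinner n (\<lambda>i. y i - z i) x = cinner n y x - cinner n z x"
  unfolding cinner_def by (simp add: algebra_simps sum_subtractf)
lemma cinner_scale_left: "cinner n (\<lambda>i. c * y i) x = cnj c * cinner n y x"
  unfolding cinner_def by (simp add: algebra_simps sum_distrib_left)

lemma trF_rank1: "trF N M (outer x1 y1) (outer x2 y2) R = cinner M x1 x2 * rform N R y2 y1"
proof -
  have "mmul M (madj (outer x1 y1)) (outer x2 y2) = (\<lambda>i l. y1 i * cinner M x1 x2 * cnj (y2 l))"
    unfolding mmul_def madj_def outer_def cinner_def
    by (intro ext) (simp add: sum_distrib_left sum_distrib_right algebra_simps)
  then show ?thesis
    unfolding trF_def mtr_def rform_def
    apply (simp add: mmul_def sum_distrib_left sum_distrib_right)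
    apply (subst sum.swap)
    by (intro sum.cong refl) (simp add: algebra_simps)
qed

lemma trF_lin_left: "trF N M (\<lambda>k i. c1 * X1 k i + c2 * X2 k i) Y R = cnj c1 * trF N M X1 Y R + cnj c2 * trF N M X2 Y R"
  unfolding trF_def mtr_def mmul_def madj_def
  by (simp add: algebra_simps sum.distrib sum_distrib_left sum_distrib_right)

lemma trF_lin_right: "trF N M X (\<lambda>k i. c1 * Y1 k i + c2 * Y2 k i) R = c1 * trF N M X Y1 R + c2 * trF N M X Y2 R"
  unfolding trF_def mtr_def mmul_def madj_def
  by (simp add: algebra_simps sum.distrib sum_distrib_left sum_distrib_right)

lemma rform_Rx:
  "rform N (Rx N P \<tau> \<alpha> \<beta> \<theta> h) x y =
    (let av = a_tilde N \<theta>; ht = h_tilde N \<theta> h; t1 = (\<lambda>i. \<alpha> * av i + \<beta> * ht i) in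
     of_real (P * \<tau>) * cinner N x t1 * cinner N t1 y
     + of_real ((1 - \<tau>) * P / (real N - 2)) * (cinner N x y - cinner N x av * cinner N av y - cinner N x ht * cinner N ht y))"
proof -
  define av where "av = a_tilde N \<theta>"
  define ht where "ht = h_tilde N \<theta> h"
  define t1 where "t1 = (\<lambda>i. \<alpha> * av i + \<beta> * ht i)"
  define g1 where "g1 = complex_of_real (P * \<tau>)"
  define g2 where "g2 = complex_of_real ((1 - \<tau>) * P / (real N - 2))"
  have R: "Rx N P \<tau> \<alpha> \<beta> \<theta> h = (\<lambda>l j. g1 * (t1 l * cnj (t1 j)) + g2 * ((if l = j then 1 else 0) - av l * cnj (av j) - ht l * cnj (ht j)))"
    unfolding Rx_def Let_def av_def ht_def t1_def g1_def g2_def outer_def by simp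
  have d: "(\<Sum>l<N. \<Sum>j<N. cnj (x l) * (if l = j then 1 else 0) * y j) = cinner N x y"
  proof -
    have "\<And>l. l < N \<Longrightarrow> (\<Sum>j<N. cnj (x l) * (if l = j then 1 else 0) * y j) = cnj (x l) * y l"
    proof -
      fix l assume l: "l < N"
      have "(\<Sum>j<N. cnj (x l) * (if l = j then 1 else 0) * y j) = (\<Sum>j<N. if l = j then cnj (x l) * y j else 0)"
        by (intro sum.cong refl) simp
      also have "\<dots> = cnj (x l) * y l" using l by (simp add: sum.delta)
      finally show "(\<Sum>j<N. cnj (x l) * (if l = j then 1 else 0) * y j) = cnj (x l) * y l" .
    qed
    then show ?thesis unfolding cinner_def by (intro sum.cong refl) simp
  qed
  have "rform N (Rx N P \<tau> \<alpha> \<beta> \<theta> h) x y =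
     g1 * (\<Sum>l<N. \<Sum>j<N. (cnj (x l) * t1 l) * (cnj (t1 j) * y j))
     + g2 * ((\<Sum>l<N. \<Sum>j<N. cnj (x l) * (if l = j then 1 else 0) * y j)
             - (\<Sum>l<N. \<Sum>j<N. (cnj (x l) * av l) * (cnj (av j) * y j))
             - (\<Sum>l<N. \<Sum>j<N. (cnj (x l) * ht l) * (cnj (ht j) * y j)))"
    unfolding rform_def R
    by (simp add: algebra_simps sum.distrib sum_subtractf sum_distrib_left)
  also have "\<dots> = g1 * cinner N x t1 * cinner N t1 y
     + g2 * (cinner N x y - cinner N x av * cinner N av y - cinner N x ht * cinner N ht y)"
    unfolding d cinner_def sum_product[symmetric] by (simp only: mult.assoc)
  finally show ?thesis unfolding Let_def av_def ht_def t1_def g1_def g2_def .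
qed



lemma norm_steer[simp]: "cmod (steer n t i) = 1"
  unfolding steer_def by (simp add: norm_exp_eq_Re)

lemma cinner_steer: "cinner n (steer n t) (steer n t) = of_nat n"
  unfolding cinner_self by simp

lemma vnorm_steer: "vnorm n (steer n t) = sqrt (real n)"
  unfolding vnorm_def by simp

lemma sum_i: "(\<Sum>i<n. real i) = real n * (real n - 1) / 2"
  by (induction n) (auto simp: field_simps)

lemma sum_i2: "(\<Sum>i<n. (real i)\<^sup>2) = real n * (real n - 1) * (2 * real n - 1) / 6"
  by (induction n) (auto simp: field_simps power2_eq_square)

lemma sum_ev: "(\<Sum>i<n. ev n i) = 0"
proof -
  have "(\<Sum>i<n. ev n i) = (\<Sum>i<n. (real n - 1) - 2 * real i)"
    unfolding ev_def by (intro sum.cong refl) simp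
  also have "\<dots> = real n * (real n - 1) - 2 * (\<Sum>i<n. real i)"
    by (simp add: sum_subtractf sum_distrib_left)
  finally show ?thesis by (simp add: sum_i)
qed

lemma sum_ev2: "(\<Sum>i<n. (ev n i)\<^sup>2) = real n * ((real n)\<^sup>2 - 1) / 3"
proof -
  have "(\<Sum>i<n. (ev n i)\<^sup>2) = (\<Sum>i<n. (real n - 1)\<^sup>2 - 4 * (real n - 1) * real i + 4 * (real i)\<^sup>2)"
    unfolding ev_def by (intro sum.cong refl) (simp add: power2_eq_square algebra_simps)
  also have "\<dots> = real n * (real n - 1)\<^sup>2 - 4 * (real n - 1) * (\<Sum>i<n. real i) + 4 * (\<Sum>i<n. (real i)\<^sup>2)"
    by (simp add: sum.distrib sum_subtractf sum_distrib_left)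
  finally have eq: "(\<Sum>i<n. (ev n i)\<^sup>2) = real n * (real n - 1)\<^sup>2 - 4 * (real n - 1) * (\<Sum>i<n. real i) + 4 * (\<Sum>i<n. (real i)\<^sup>2)" .
  show ?thesis unfolding eq sum_i sum_i2 by (simp add: field_simps power2_eq_square)
qed

lemma cinner_steer_ev: "cinner n (steer n t) (\<lambda>i. complex_of_real (ev n i) * steer n t i) = 0"
proof -
  have "cinner n (steer n t) (\<lambda>i. complex_of_real (ev n i) * steer n t i) = of_real (\<Sum>i<n. ev n i)"
    unfolding cinner_def of_real_sum
  proof (intro sum.cong refl)
    fix i
    have "cnj (steer n t i) * (complex_of_real (ev n i) * steer n t i) = complex_of_real (ev n i) * (cnj (steer n t i) * steer n t i)"
      by (simp add: algebra_simps)
    also have "cnj (steer n t i) * steer n t i = 1"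
      using complex_norm_square[of "steer n t i"] by (simp add: mult.commute)
    finally show "cnj (steer n t i) * (complex_of_real (ev n i) * steer n t i) = complex_of_real (ev n i)" by simp
  qed
  then show ?thesis by (simp add: sum_ev)
qed

lemma cinner_ev_ev: "cinner n (\<lambda>i. complex_of_real (ev n i) * steer n t i) (\<lambda>i. complex_of_real (ev n i) * steer n t i) = of_real (real n * ((real n)\<^sup>2 - 1) / 3)"
  unfolding cinner_self by (simp add: norm_mult sum_ev2)

lemma CS1:
  assumes "cinner n y y = 1"
  shows "(cmod (cinner n y x))\<^sup>2 \<le> Re (cinner n x x)"
proof -
  define c where "c = cinner n y x"
  define z where "z = (\<lambda>i. x i - c * y i)"
  have "cinner n z z = cinner n x x - c * cinner n x y - cnj c * cinner n y x + cnj c * c * cinner n y y"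
    unfolding z_def cinner_diff_left cinner_diff_right cinner_scale_left cinner_scale_right
    by (simp add: algebra_simps)
  also have "cinner n x y = cnj c" unfolding c_def by (subst cinner_sym) simp
  finally have "cinner n z z = cinner n x x - c * cnj c" using assms unfolding c_def by simp
  moreover have "Re (cinner n z z) \<ge> 0" unfolding cinner_self by (simp add: sum_nonneg)
  ultimately show ?thesis unfolding c_def by (simp add: complex_norm_square[symmetric] del: complex_norm_square)
qed



lemma vec_facts:
  fixes N :: nat and \<theta> P \<tau> :: real and h :: "nat \<Rightarrow> complex"
  assumes N: "N > 0"
  defines "a \<equiv> steer N \<theta>" and "av \<equiv> a_tilde N \<theta>" and "ht \<equiv> h_tilde N \<theta> h"
    and "u \<equiv> (\<lambda>i. complex_of_real (ev N i) * steer N \<theta> i)"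
  defines "g \<equiv> cinner N u ht" and "g1 \<equiv> P * \<tau>" and "g2 \<equiv> (1 - \<tau>) * P / (real N - 2)"
    and "U \<equiv> real N * ((real N)\<^sup>2 - 1) / 3"
  shows "rform N (Rx N P \<tau> \<alpha> \<beta> \<theta> h) a a = of_real (g1 * real N * (cmod \<alpha>)\<^sup>2)"
    and "rform N (Rx N P \<tau> \<alpha> \<beta> \<theta> h) a u = of_real g1 * \<alpha> * of_real (sqrt (real N)) * cnj \<beta> * cnj g"
    and "rform N (Rx N P \<tau> \<alpha> \<beta> \<theta> h) u u = of_real (g1 * (cmod \<beta>)\<^sup>2 * (cmod g)\<^sup>2 + g2 * (U - (cmod g)\<^sup>2))"
    and "(cmod g)\<^sup>2 \<le> U"
proof -
  define sN where "sN = complex_of_real (sqrt (real N))"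
  have sN0: "sN \<noteq> 0" using N unfolding sN_def by simp
  have sNsN: "sN * sN = of_nat N" unfolding sN_def by (simp flip: of_real_mult)
  have cnj_sN: "cnj sN = sN" unfolding sN_def by simp
  have av_def': "av = (\<lambda>i. (1 / sN) * a i)"
    unfolding av_def a_def a_tilde_def vnorm_steer sN_def by auto
  have a_av: "a = (\<lambda>i. sN * av i)" unfolding av_def' using sN0 by auto
  have aa: "cinner N a a = of_nat N" unfolding a_def by (rule cinner_steer)
  have atat: "cinner N av av = 1"
    unfolding av_def' cinner_scale_left cinner_scale_right aa using sN0 sNsN cnj_sN N
    by (simp add: field_simps)
  have a_at_in: "cinner N a av = sN" and av_a_in: "cinner N av a = sN"
    unfolding av_def' cinner_scale_left cinner_scale_right aa using sN0 sNsN cnj_sN N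
    by (simp_all add: field_simps)
  have au: "cinner N a u = 0" unfolding a_def u_def by (rule cinner_steer_ev)
  have ua: "cinner N u a = 0" using au by (subst cinner_sym) simp
  have uu: "cinner N u u = of_real U" unfolding u_def U_def by (rule cinner_ev_ev)
  have u_av: "cinner N u av = 0" and av_u: "cinner N av u = 0"
    unfolding av_def' cinner_scale_left cinner_scale_right ua au by simp_all
  define r where "r = (\<lambda>i. h i - cinner N av h * av i)"
  define vn where "vn = vnorm N r"
  have ht_r: "ht = (\<lambda>i. (1 / complex_of_real vn) * r i)"
    unfolding ht_def h_tilde_def Let_def r_def vn_def av_def by auto
  have av_r: "cinner N av r = 0"
    unfolding r_def cinner_diff_right cinner_scale_right atat by simp
  have av_ht: "cinner N av ht = 0" unfolding ht_r cinner_scale_right av_r by simp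
  have ht_av: "cinner N ht av = 0" using av_ht by (subst cinner_sym) simp
  have a_ht: "cinner N a ht = 0" unfolding a_av cinner_scale_left av_ht by simp
  have ht_a: "cinner N ht a = 0" using a_ht by (subst cinner_sym) simp
  define t1 where "t1 = (\<lambda>i. \<alpha> * av i + \<beta> * ht i)"
  have a_t1: "cinner N a t1 = \<alpha> * sN" unfolding t1_def cinner_add_right cinner_scale_right a_at_in a_ht by simp
  have t1_a: "cinner N t1 a = cnj \<alpha> * sN" using a_t1 cnj_sN by (subst cinner_sym) simp
  have u_t1: "cinner N u t1 = \<beta> * g" unfolding t1_def cinner_add_right cinner_scale_right u_av g_def by simp
  have t1_u: "cinner N t1 u = cnj \<beta> * cnj g" using u_t1 by (subst cinner_sym) simp
  have ht_u: "cinner N ht u = cnj g" unfolding g_def by (subst cinner_sym) simp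
  have RF: "\<And>x y. rform N (Rx N P \<tau> \<alpha> \<beta> \<theta> h) x y =
     of_real g1 * cinner N x t1 * cinner N t1 y
     + of_real g2 * (cinner N x y - cinner N x av * cinner N av y - cinner N x ht * cinner N ht y)"
    unfolding rform_Rx Let_def t1_def av_def ht_def g1_def g2_def ..
  show "rform N (Rx N P \<tau> \<alpha> \<beta> \<theta> h) a a = of_real (g1 * real N * (cmod \<alpha>)\<^sup>2)"
    unfolding RF a_t1 t1_a aa a_at_in av_a_in a_ht ht_a
    using sNsN complex_norm_square[of \<alpha>] by (simp add: algebra_simps)
  show "rform N (Rx N P \<tau> \<alpha> \<beta> \<theta> h) a u = of_real g1 * \<alpha> * sN * cnj \<beta> * cnj g"
    unfolding RF a_t1 t1_u au a_at_in av_u a_ht by (simp add: algebra_simps)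
  show "rform N (Rx N P \<tau> \<alpha> \<beta> \<theta> h) u u = of_real (g1 * (cmod \<beta>)\<^sup>2 * (cmod g)\<^sup>2 + g2 * (U - (cmod g)\<^sup>2))"
    unfolding RF u_t1 t1_u uu u_av av_u ht_u g_def[symmetric]
    using complex_norm_square[of \<beta>] complex_norm_square[of g] by (simp add: algebra_simps)
  show "(cmod g)\<^sup>2 \<le> U"
  proof (cases "vn = 0")
    case True
    then have "ht = (\<lambda>i. 0)" unfolding ht_r by simp
    then have "g = 0" unfolding g_def cinner_def by simp
    then show ?thesis unfolding U_def using N by simp
  next
    case False
    have rr: "cinner N r r = of_real (vn\<^sup>2)"
      unfolding cinner_self vn_def vnorm_def by (simp add: sum_nonneg)
    have "cinner N ht ht = 1"
      unfolding ht_r cinner_scale_left cinner_scale_right rr using False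
      by (simp add: field_simps power2_eq_square)
    then have "(cmod (cinner N ht u))\<^sup>2 \<le> Re (cinner N u u)" by (rule CS1)
    then show ?thesis unfolding ht_u uu by simp
  qed
qed



lemma E2_pos: "(M::real) \<ge> 2 \<Longrightarrow> M * (M\<^sup>2 - 1) / 3 > 0"
proof -
  assume "M \<ge> 2"
  then have "M * M \<ge> 2 * 2" by (intro mult_mono) auto
  then show "M * (M\<^sup>2 - 1) / 3 > 0" using \<open>M \<ge> 2\<close> by (simp add: power2_eq_square)
qed

lemma eq1_gen: fixes D0 M Q w Z \<sigma> C L :: real assumes "D0 = M * w\<^sup>2 * Q * Z" "M > 0" "Q > 0" "w > 0" "Z > 0" "C > 0" "L > 0"
  shows "\<sigma>\<^sup>2 * M * Q / (2 * C * L * D0) = \<sigma>\<^sup>2 / (2 * C * L * (w\<^sup>2 * Z))"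
  using assms by (simp add: field_simps)

lemma Z'eq_gen: fixes w cs M N P K Z' E2 Q g2 U Asq \<tau> :: real
  assumes "w = pi * cs / 2" "Z' = E2 * Q + M * g2 * U" "E2 = M * (M\<^sup>2 - 1) / 3" "Q = P * \<tau> * N * Asq"
   "g2 = (1 - \<tau>) * P / (N - 2)" "U = N * (N\<^sup>2 - 1) / 3" "K = Asq * \<tau> * (M\<^sup>2 - 1) + (N\<^sup>2 - 1) * (1 - \<tau>) / (N - 2)" "N \<ge> 3"
  shows "w\<^sup>2 * Z' = pi\<^sup>2 * cs\<^sup>2 * M * N * P * K / 12"
proof -
  have "N - 2 \<noteq> 0" using assms by simp
  then show ?thesis unfolding assms(1-7) by (simp add: field_simps power2_eq_square)
qed

lemma real_bound:
  fixes M N L :: nat and P \<tau> \<sigma> C Asq G Q w E2 U g2 D0 K cs :: real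
  assumes M: "M \<ge> 2" and N: "N \<ge> 3" and L: "L \<ge> 1" and P: "P > 0" and t0: "0 \<le> \<tau>" and t1: "\<tau> \<le> 1"
    and s: "\<sigma> > 0" and C: "C > 0" and cs: "cs > 0" and w: "w = pi * cs / 2"
    and G: "0 \<le> G" "G \<le> U" and U: "U = real N * ((real N)\<^sup>2 - 1) / 3"
    and E2: "E2 = real M * ((real M)\<^sup>2 - 1) / 3" and Asq: "Asq \<ge> 0"
    and Q: "Q = P * \<tau> * real N * Asq" and g2: "g2 = (1 - \<tau>) * P / (real N - 2)"
    and D0: "D0 = real M * w\<^sup>2 * Q * (E2 * Q + real M * g2 * (U - G))" and D0nz: "D0 \<noteq> 0"
    and K: "K = Asq * \<tau> * ((real M)\<^sup>2 - 1) + ((real N)\<^sup>2 - 1) * (1 - \<tau>) / (real N - 2)"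
  shows "K > 0 \<and> \<sigma>\<^sup>2 * real M * Q / (2 * C * real L * D0) \<ge> 6 * \<sigma>\<^sup>2 / (C * real L * pi\<^sup>2 * cs\<^sup>2 * real M * real N * P * K)"
proof -
  have Qnz: "Q \<noteq> 0" using D0nz D0 by auto
  have "Q \<ge> 0" using Q P t0 Asq by simp
  then have Qp: "Q > 0" using Qnz by simp
  have E2p: "E2 > 0" using M unfolding E2 by (intro E2_pos) simp
  have g2n: "g2 \<ge> 0" using t1 P N unfolding g2 by simp
  have Un: "U - G \<ge> 0" using G by simp
  define Z where "Z = E2 * Q + real M * g2 * (U - G)"
  define Z' where "Z' = E2 * Q + real M * g2 * U"
  have "real M * g2 * (U - G) \<ge> 0" using g2n Un by simp
  then have Zp: "Z > 0" unfolding Z_def using E2p Qp by (simp add: add_pos_nonneg)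
  have "real M * g2 * G \<ge> 0" using g2n G by simp
  then have ZZ: "Z \<le> Z'" unfolding Z_def Z'_def by (simp add: algebra_simps)
  have wp: "w > 0" unfolding w using cs by simp
  have Mp: "real M > 0" "real L > 0" using M L by auto
  have eq1: "\<sigma>\<^sup>2 * real M * Q / (2 * C * real L * D0) = \<sigma>\<^sup>2 / (2 * C * real L * (w\<^sup>2 * Z))"
    by (rule eq1_gen) (use D0 Z_def Qp Mp wp C Zp in auto)
  have Z'eq: "w\<^sup>2 * Z' = pi\<^sup>2 * cs\<^sup>2 * real M * real N * P * K / 12"
    by (rule Z'eq_gen[OF w Z'_def E2 Q g2 U K]) (use N in simp)
  have Kp: "K > 0"
  proof -
    have "w\<^sup>2 * Z' > 0" using Zp ZZ wp by simp
    then have "pi\<^sup>2 * cs\<^sup>2 * real M * real N * P * K > 0" unfolding Z'eq by simp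
    moreover have "pi\<^sup>2 * cs\<^sup>2 * real M * real N * P > 0" using cs P M N by simp
    ultimately show ?thesis by (simp add: zero_less_mult_iff)
  qed
  have "w\<^sup>2 * Z \<le> w\<^sup>2 * Z'" using ZZ by (simp add: mult_left_mono)
  then have "\<sigma>\<^sup>2 / (2 * C * real L * (w\<^sup>2 * Z')) \<le> \<sigma>\<^sup>2 / (2 * C * real L * (w\<^sup>2 * Z))"
    using Zp wp C Mp s by (intro divide_left_mono mult_left_mono mult_pos_pos) auto
  also have "\<dots> = \<sigma>\<^sup>2 * real M * Q / (2 * C * real L * D0)" unfolding eq1 ..
  finally have "\<sigma>\<^sup>2 / (2 * C * real L * (w\<^sup>2 * Z')) \<le> \<sigma>\<^sup>2 * real M * Q / (2 * C * real L * D0)" .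
  moreover have "\<sigma>\<^sup>2 / (2 * C * real L * (w\<^sup>2 * Z')) = 6 * \<sigma>\<^sup>2 / (C * real L * pi\<^sup>2 * cs\<^sup>2 * real M * real N * P * K)"
    unfolding Z'eq by (simp add: field_simps)
  ultimately show ?thesis using Kp by simp
qed



lemma CRB_main:
  fixes N M L :: nat and P \<tau> \<sigma>R \<theta> :: real and c3 \<alpha> \<beta> :: complex and h :: "nat \<Rightarrow> complex"
  assumes N: "N \<ge> 3" and M: "M \<ge> 2" and L: "L \<ge> 1" and P: "P > 0" and t0: "0 \<le> \<tau>" and t1: "\<tau> \<le> 1"
    and s: "\<sigma>R > 0" and c3: "c3 \<noteq> 0" and cs: "cos \<theta> > 0"
  defines "K \<equiv> (cmod \<alpha>)\<^sup>2 * \<tau> * ((real M)\<^sup>2 - 1) + ((real N)\<^sup>2 - 1) * (1 - \<tau>) / (real N - 2)"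
  shows "CRB N M L P \<tau> \<sigma>R c3 \<alpha> \<beta> \<theta> h = \<infinity> \<or>
    (K > 0 \<and> CRB N M L P \<tau> \<sigma>R c3 \<alpha> \<beta> \<theta> h \<ge> ereal (6 * \<sigma>R\<^sup>2 / ((cmod c3)\<^sup>2 * real L * pi\<^sup>2 * (cos \<theta>)\<^sup>2 * real M * real N * P * K)))"
proof -
  define a where "a = steer N \<theta>"
  define b where "b = steer M \<theta>"
  define u where "u = (\<lambda>i. complex_of_real (ev N i) * steer N \<theta> i)"
  define b' where "b' = (\<lambda>i. complex_of_real (ev M i) * steer M \<theta> i)"
  define w where "w = pi * cos \<theta> / 2"
  define c0 where "c0 = - \<i> * complex_of_real w"
  define R where "R = Rx N P \<tau> \<alpha> \<beta> \<theta> h"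
  define g where "g = cinner N u (h_tilde N \<theta> h)"
  define g1 where "g1 = P * \<tau>"
  define g2 where "g2 = (1 - \<tau>) * P / (real N - 2)"
  define U where "U = real N * ((real N)\<^sup>2 - 1) / 3"
  define E2 where "E2 = real M * ((real M)\<^sup>2 - 1) / 3"
  define Q where "Q = g1 * real N * (cmod \<alpha>)\<^sup>2"
  define Pp where "Pp = g1 * (cmod \<beta>)\<^sup>2 * (cmod g)\<^sup>2 + g2 * (U - (cmod g)\<^sup>2)"
  define S where "S = of_real g1 * \<alpha> * of_real (sqrt (real N)) * cnj \<beta> * cnj g"
  have N0: "N > 0" using N by simp
  note vf = vec_facts[OF N0]
  have q: "rform N R a a = of_real Q" unfolding Q_def a_def R_def g1_def by (rule vf(1))
  have sf: "rform N R a u = S" unfolding S_def a_def R_def g1_def g_def u_def by (rule vf(2))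
  have p: "rform N R u u = of_real Pp" unfolding Pp_def R_def g1_def g2_def g_def u_def U_def by (rule vf(3))
  have GU: "(cmod g)\<^sup>2 \<le> U" unfolding g_def u_def U_def by (rule vf(4))
  have A: "Amat M N \<theta> = outer b a" unfolding Amat_def a_def b_def ..
  have Ad: "Adot M N \<theta> = (\<lambda>k j. c0 * outer b' a k j + (- c0) * outer b u k j)"
    unfolding Adot_explicit Amat_def outer_def c0_def w_def b'_def u_def a_def b_def
    by (intro ext) (simp add: field_simps)
  have bb: "cinner M b b = of_nat M" unfolding b_def by (rule cinner_steer)
  have bb': "cinner M b b' = 0" unfolding b_def b'_def by (rule cinner_steer_ev)
  have b'b: "cinner M b' b = 0" using bb' by (subst cinner_sym) simp
  have b'b': "cinner M b' b' = of_real E2" unfolding b'_def E2_def by (rule cinner_ev_ev)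
  have c0c0: "cnj c0 * c0 = of_real (w\<^sup>2)" unfolding c0_def by (simp add: power2_eq_square algebra_simps)
  have T1: "mtr N (mmul N (mmul M (madj (Amat M N \<theta>)) (Amat M N \<theta>)) R) = of_real (real M * Q)"
    unfolding trF_def[symmetric] A trF_rank1 bb q by simp
  have T2: "mtr N (mmul N (mmul M (madj (Adot M N \<theta>)) (Adot M N \<theta>)) R) = of_real (w\<^sup>2 * (E2 * Q + real M * Pp))"
  proof -
    have "mtr N (mmul N (mmul M (madj (Adot M N \<theta>)) (Adot M N \<theta>)) R)
       = cnj c0 * (c0 * (of_real E2 * of_real Q) + (- c0) * 0) + cnj (- c0) * (c0 * 0 + (- c0) * (of_nat M * of_real Pp))"
      unfolding trF_def[symmetric] Ad trF_lin_left trF_lin_right trF_rank1 bb b'b bb' b'b' q p by simp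
    also have "\<dots> = (cnj c0 * c0) * (of_real E2 * of_real Q + of_nat M * of_real Pp)" by (simp add: algebra_simps)
    finally show ?thesis unfolding c0c0 by simp
  qed
  have T3: "mtr N (mmul N (mmul M (madj (Adot M N \<theta>)) (Amat M N \<theta>)) R) = - cnj c0 * of_nat M * S"
  proof -
    have "mtr N (mmul N (mmul M (madj (Adot M N \<theta>)) (Amat M N \<theta>)) R) = cnj c0 * (0 * of_real Q) + cnj (- c0) * (of_nat M * S)"
      unfolding trF_def[symmetric] Ad A trF_lin_left trF_rank1 bb b'b q sf by simp
    then show ?thesis by simp
  qed
  have cmodc0: "cmod c0 = w" unfolding c0_def w_def using cs by (simp add: norm_mult)
  have S2: "(cmod S)\<^sup>2 = g1\<^sup>2 * real N * (cmod \<alpha>)\<^sup>2 * (cmod \<beta>)\<^sup>2 * (cmod g)\<^sup>2"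
    unfolding S_def by (simp add: norm_mult power_mult_distrib)
  have T3sq: "(cmod (- cnj c0 * of_nat M * S))\<^sup>2 = w\<^sup>2 * (real M)\<^sup>2 * (g1\<^sup>2 * real N * (cmod \<alpha>)\<^sup>2 * (cmod \<beta>)\<^sup>2 * (cmod g)\<^sup>2)"
    unfolding S2[symmetric] by (simp add: norm_mult power_mult_distrib cmodc0)
  define D0 where "D0 = real M * w\<^sup>2 * Q * (E2 * Q + real M * g2 * (U - (cmod g)\<^sup>2))"
  have D0eq: "real M * Q * (w\<^sup>2 * (E2 * Q + real M * Pp)) - w\<^sup>2 * (real M)\<^sup>2 * (g1\<^sup>2 * real N * (cmod \<alpha>)\<^sup>2 * (cmod \<beta>)\<^sup>2 * (cmod g)\<^sup>2) = D0"
    unfolding D0_def Pp_def Q_def by (simp add: algebra_simps power2_eq_square)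
  have den: "of_real (real M * Q) * of_real (w\<^sup>2 * (E2 * Q + real M * Pp)) - complex_of_real ((cmod (- cnj c0 * of_nat M * S))\<^sup>2) = of_real D0"
    unfolding T3sq D0eq[symmetric] by simp
  have CRBeq: "CRB N M L P \<tau> \<sigma>R c3 \<alpha> \<beta> \<theta> h = (if D0 = 0 then \<infinity> else
      ereal (Re (complex_of_real (\<sigma>R\<^sup>2) * of_real (real M * Q) / (2 * complex_of_real ((cmod c3)\<^sup>2) * of_nat L * of_real D0))))"
    unfolding CRB_def Let_def R_def[symmetric] T1 T2 T3 den by simp
  show ?thesis
  proof (cases "D0 = 0")
    case True then show ?thesis unfolding CRBeq by simp
  next
    case False
    have val: "CRB N M L P \<tau> \<sigma>R c3 \<alpha> \<beta> \<theta> h = ereal (\<sigma>R\<^sup>2 * real M * Q / (2 * (cmod c3)\<^sup>2 * real L * D0))"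
    proof -
      have "complex_of_real (\<sigma>R\<^sup>2) * of_real (real M * Q) / (2 * complex_of_real ((cmod c3)\<^sup>2) * of_nat L * of_real D0)
          = of_real (\<sigma>R\<^sup>2 * real M * Q / (2 * (cmod c3)\<^sup>2 * real L * D0))" by simp
      then show ?thesis unfolding CRBeq using False by simp
    qed
    have rb: "K > 0 \<and> \<sigma>R\<^sup>2 * real M * Q / (2 * (cmod c3)\<^sup>2 * real L * D0) \<ge> 6 * \<sigma>R\<^sup>2 / ((cmod c3)\<^sup>2 * real L * pi\<^sup>2 * (cos \<theta>)\<^sup>2 * real M * real N * P * K)"
      by (rule real_bound[where Asq="(cmod \<alpha>)\<^sup>2", OF M N L P t0 t1 s _ cs w_def _ GU U_def E2_def _ _ g2_def D0_def False _])
         (use c3 in \<open>auto simp: Q_def g1_def K_def\<close>)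
    then show ?thesis unfolding val by simp
  qed
qed



lemma bound_gt:
  fixes \<sigma> \<epsilon> cs Y :: real
  assumes e: "\<epsilon> > 0" and s: "\<sigma> > 0" and cs: "cs > 0" and Y: "Y > 0"
    and lt: "cs < sqrt 6 * \<sigma> / sqrt (\<epsilon> * Y)"
  shows "\<epsilon> < 6 * \<sigma>\<^sup>2 / (Y * cs\<^sup>2)"
proof -
  have "cs\<^sup>2 < (sqrt 6 * \<sigma> / sqrt (\<epsilon> * Y))\<^sup>2"
    using lt cs by (intro power_strict_mono) auto
  also have "\<dots> = 6 * \<sigma>\<^sup>2 / (\<epsilon> * Y)"
    using e Y by (simp add: power_divide power_mult_distrib)
  finally have "cs\<^sup>2 * (\<epsilon> * Y) < 6 * \<sigma>\<^sup>2" using e Y by (simp add: field_simps)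
  then show ?thesis using cs Y by (simp add: field_simps)
qed

theorem lemma2:
  fixes N M L :: nat and P \<tau> \<sigma>R \<epsilon> :: real and c3 \<alpha> \<beta> :: complex
  assumes "N \<ge> 3" and "M \<ge> 2" and "L \<ge> 1"
    and "P > 0" and "0 \<le> \<tau>" and "\<tau> \<le> 1" and "\<sigma>R > 0" and "c3 \<noteq> 0"
    and "(cmod \<alpha>)\<^sup>2 + (cmod \<beta>)\<^sup>2 = 1"
    and "\<epsilon> > 0"
  shows "let D = \<epsilon> * real M * real N * pi\<^sup>2 * real L * P * (cmod c3)\<^sup>2 *
                 ((cmod \<alpha>)\<^sup>2 * \<tau> * ((real M)\<^sup>2 - 1) + ((real N)\<^sup>2 - 1) * (1 - \<tau>) / (real N - 2));
             prb = measure (joint_law N) {x \<in> space (joint_law N).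
                     CRB N M L P \<tau> \<sigma>R c3 \<alpha> \<beta> (fst x) (snd x) > ereal \<epsilon>}
         in (if D > 0 \<and> sqrt 6 * \<sigma>R / sqrt D < 1
             then prb \<ge> 2 / pi * arcsin (sqrt 6 * \<sigma>R / sqrt D)
             else prb \<ge> 1)"
  proof -
  note A = assms
  define K where "K = (cmod \<alpha>)\<^sup>2 * \<tau> * ((real M)\<^sup>2 - 1) + ((real N)\<^sup>2 - 1) * (1 - \<tau>) / (real N - 2)"
  define D where "D = \<epsilon> * real M * real N * pi\<^sup>2 * real L * P * (cmod c3)\<^sup>2 *
                 ((cmod \<alpha>)\<^sup>2 * \<tau> * ((real M)\<^sup>2 - 1) + ((real N)\<^sup>2 - 1) * (1 - \<tau>) / (real N - 2))"
  define E where "E = {x \<in> space (joint_law N). CRB N M L P \<tau> \<sigma>R c3 \<alpha> \<beta> (fst x) (snd x) > ereal \<epsilon>}"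
  define x where "x = sqrt 6 * \<sigma>R / sqrt D"
  define Y where "Y = (cmod c3)\<^sup>2 * real L * pi\<^sup>2 * real M * real N * P * K"
  have DY: "D = \<epsilon> * Y" unfolding D_def Y_def K_def by (simp add: algebra_simps)
  have Emeas: "E \<in> sets (joint_law N)" unfolding E_def by (rule CRB_meas)
  have crb_gt: "CRB N M L P \<tau> \<sigma>R c3 \<alpha> \<beta> \<theta> h > ereal \<epsilon>"
    if cs: "0 < cos \<theta>" and cx: "D > 0 \<Longrightarrow> cos \<theta> < x" for \<theta> h
  proof -
    from CRB_main[OF A(1-8) cs, of \<alpha> \<beta> h, folded K_def]
    consider "CRB N M L P \<tau> \<sigma>R c3 \<alpha> \<beta> \<theta> h = \<infinity>"
      | "K > 0" "CRB N M L P \<tau> \<sigma>R c3 \<alpha> \<beta> \<theta> h \<ge> ereal (6 * \<sigma>R\<^sup>2 / ((cmod c3)\<^sup>2 * real L * pi\<^sup>2 * (cos \<theta>)\<^sup>2 * real M * real N * P * K))"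
      by blast
    then show ?thesis
    proof cases
      case 1 then show ?thesis by simp
    next
      case 2
      have Yp: "Y > 0" unfolding Y_def using 2(1) A by simp
      then have "D > 0" unfolding DY using A by simp
      then have "cos \<theta> < sqrt 6 * \<sigma>R / sqrt (\<epsilon> * Y)" using cx unfolding x_def DY by simp
      then have "\<epsilon> < 6 * \<sigma>R\<^sup>2 / (Y * (cos \<theta>)\<^sup>2)" by (rule bound_gt[OF A(10) A(7) cs Yp])
      also have "6 * \<sigma>R\<^sup>2 / (Y * (cos \<theta>)\<^sup>2) = 6 * \<sigma>R\<^sup>2 / ((cmod c3)\<^sup>2 * real L * pi\<^sup>2 * (cos \<theta>)\<^sup>2 * real M * real N * P * K)"
        unfolding Y_def by (simp add: algebra_simps)
      finally have "ereal \<epsilon> < ereal (6 * \<sigma>R\<^sup>2 / ((cmod c3)\<^sup>2 * real L * pi\<^sup>2 * (cos \<theta>)\<^sup>2 * real M * real N * P * K))"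
        by simp
      then show ?thesis using 2(2) by (rule less_le_trans)
    qed
  qed
  have main: "if D > 0 \<and> x < 1 then measure (joint_law N) E \<ge> 2 / pi * arcsin x else measure (joint_law N) E \<ge> 1"
  proof (cases "D > 0 \<and> x < 1")
    case True
    have x0: "x > 0" unfolding x_def using True A by simp
    define c where "c = arccos x"
    have cx: "cos c = x" unfolding c_def using x0 True by simp
    have c0: "0 \<le> c" "c \<le> pi" unfolding c_def using x0 True by (auto intro: arccos_lbound arccos_ubound)
    have c2: "c < pi/2"
    proof (rule ccontr)
      assume "\<not> c < pi/2"
      then have "cos c \<le> cos (pi/2)" using c0 by (intro cos_monotone_0_pi_le) auto
      then show False using cx x0 by simp
    qed
    have "measure (joint_law N) E \<ge> (pi - 2*c)/pi"
    proof (rule meas_part[OF c0(1) c2 Emeas])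
      fix \<theta> h assume th: "(\<theta>, h) \<in> space (joint_law N)" "c < \<bar>\<theta>\<bar>" "\<bar>\<theta>\<bar> < pi/2"
      have cs: "0 < cos \<theta>" using th by (intro cos_gt_zero_pi) auto
      have "cos \<bar>\<theta>\<bar> < cos c" using th c0 by (intro cos_monotone_0_pi) auto
      then have "cos \<theta> < x" using cx by simp
      then have "CRB N M L P \<tau> \<sigma>R c3 \<alpha> \<beta> \<theta> h > ereal \<epsilon>" using crb_gt[OF cs] by blast
      then show "(\<theta>, h) \<in> E" unfolding E_def using th by simp
    qed
    moreover have "(pi - 2*c)/pi = 2 / pi * arcsin x"
      unfolding c_def using x0 True by (simp add: arcsin_arccos_eq field_simps)
    ultimately have "2 / pi * arcsin x \<le> measure (joint_law N) E" by simp
    then show ?thesis using True by simp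
  next
    case False
    have "measure (joint_law N) E \<ge> (pi - 2*0)/pi"
    proof (rule meas_part[OF _ _ Emeas])
      fix \<theta> h assume th: "(\<theta>, h) \<in> space (joint_law N)" "0 < \<bar>\<theta>\<bar>" "\<bar>\<theta>\<bar> < pi/2"
      have cs: "0 < cos \<theta>" using th by (intro cos_gt_zero_pi) auto
      have "cos \<bar>\<theta>\<bar> < cos 0" using th by (intro cos_monotone_0_pi) auto
      then have c1: "cos \<theta> < 1" by simp
      have "D > 0 \<Longrightarrow> cos \<theta> < x" using False c1 by auto
      then have "CRB N M L P \<tau> \<sigma>R c3 \<alpha> \<beta> \<theta> h > ereal \<epsilon>" using crb_gt[OF cs] by blast
      then show "(\<theta>, h) \<in> E" unfolding E_def using th by simp
    qed auto
    then have "1 \<le> measure (joint_law N) E" by simp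
    then show ?thesis using False by (subst if_not_P) auto
  qed
  then show ?thesis unfolding Let_def D_def E_def x_def by assumption
qed

end
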